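(* Let $n$ be a positive integer and $\mathcal{X}$ a class of finite groups with $c^{\mathcal{X}}_n<1$. Let $G$ be a profinite group, $M$ a normal open subgroup of $G$, and $\phi$ a continuous automorphism of $M$ with $\phi^n=\mathrm{id}$ such that for every normal open subgroup $N$ of $G$ contained in $M$ we have $N^\phi\subseteq N$ and $M/N\in\mathcal{X}$. If $X_{n,\phi}(M)\neq M$, then $\mathbf{m}_M(X_{n,\phi}(M))\leq c^{\mathcal{X}}_n$.
   Context: $\mathbf{m}_M$ denotes the normalized Haar measure of the compact group $M$. For a group $K$ and an automorphism $\phi$ of $K$ whose order divides $n$, writing $x^\phi$ for the image of $x$, $X_{n,\phi}(K):=\{x\in K : x x^{\phi} x^{\phi^2}\cdots x^{\phi^{n-1}}=1\}$. For a class $\mathcal{X}$ of finite groups, $$c^{\mathcal{X}}_n:=\sup\left(\left\{\frac{|X_{n,\phi}(H)|}{|H|} : H\in\mathcal{X},\ \phi\in \mathrm{Aut}(H),\ \phi^n=\mathrm{id}\right\}\setminus\{1\}\right).$$ *)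

theory Defs
  imports "HOL-Analysis.Analysis" "HOL-Algebra.Algebra"
begin

definition topological_group :: "('a, 'm) monoid_scheme \<Rightarrow> 'a topology \<Rightarrow> bool" where
  "topological_group G T \<longleftrightarrow> group G \<and> topspace T = carrier G
     \<and> continuous_map (prod_topology T T) T (\<lambda>(x, y). x \<otimes>\<^bsub>G\<^esub> y)
     \<and> continuous_map T T (\<lambda>x. inv\<^bsub>G\<^esub> x)"

definition totally_disconnected_space :: "'a topology \<Rightarrow> bool" where
  "totally_disconnected_space T \<longleftrightarrow> (\<forall>S. connectedin T S \<longrightarrow> (\<exists>a. S \<subseteq> {a}))"

definition profinite_group :: "('a, 'm) monoid_scheme \<Rightarrow> 'a topology \<Rightarrow> bool" where
  "profinite_group G T \<longleftrightarrow> topological_group G T \<and> compact_space T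
     \<and> Hausdorff_space T \<and> totally_disconnected_space T"

fun twisted_prod :: "('a, 'm) monoid_scheme \<Rightarrow> ('a \<Rightarrow> 'a) \<Rightarrow> nat \<Rightarrow> 'a \<Rightarrow> 'a" where
  "twisted_prod K \<phi> 0 x = \<one>\<^bsub>K\<^esub>"
| "twisted_prod K \<phi> (Suc k) x = twisted_prod K \<phi> k x \<otimes>\<^bsub>K\<^esub> (\<phi> ^^ k) x"

definition X_set :: "('a, 'm) monoid_scheme \<Rightarrow> nat \<Rightarrow> ('a \<Rightarrow> 'a) \<Rightarrow> 'a set" where
  "X_set K n \<phi> = {x \<in> carrier K. twisted_prod K \<phi> n x = \<one>\<^bsub>K\<^esub>}"

definition aut_order_dvd :: "('a, 'm) monoid_scheme \<Rightarrow> nat \<Rightarrow> ('a \<Rightarrow> 'a) \<Rightarrow> bool" where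
  "aut_order_dvd H n \<phi> \<longleftrightarrow> \<phi> \<in> iso H H \<and> (\<forall>x \<in> carrier H. (\<phi> ^^ n) x = x)"

text \<open>The constant c_n^X for a class X of finite groups (represented by a predicate;
  membership of a group is understood up to isomorphism).\<close>
definition c_const :: "(('b, 'c) monoid_scheme \<Rightarrow> bool) \<Rightarrow> nat \<Rightarrow> real" where
  "c_const Cls n = Sup ({real (card (X_set H n \<phi>)) / real (card (carrier H)) | H \<phi>.
                          Cls H \<and> aut_order_dvd H n \<phi>} - {1})"

definition haar_measure :: "('a, 'm) monoid_scheme \<Rightarrow> 'a topology \<Rightarrow> 'a measure \<Rightarrow> bool" where
  "haar_measure K T \<mu> \<longleftrightarrow>
     space \<mu> = carrier K
   \<and> sets \<mu> = sigma_sets (carrier K) {U. openin T U}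
   \<and> emeasure \<mu> (carrier K) = 1
   \<and> (\<forall>g \<in> carrier K. \<forall>A \<in> sets \<mu>. emeasure \<mu> (g <#\<^bsub>K\<^esub> A) = emeasure \<mu> A)
   \<and> (\<forall>A \<in> sets \<mu>. emeasure \<mu> A = (INF U \<in> {U. openin T U \<and> A \<subseteq> U}. emeasure \<mu> U))
   \<and> (\<forall>U. openin T U \<longrightarrow> emeasure \<mu> U = (SUP C \<in> {C. compactin T C \<and> C \<subseteq> U}. emeasure \<mu> C))"

end

theory Submission
  imports Defs
begin


lemma tg_group: "topological_group G T \<Longrightarrow> group G"
  by (simp add: topological_group_def)

lemma tg_cont_lmult:
  assumes "topological_group G T" "a \<in> carrier G"
  shows "continuous_map T T (\<lambda>x. a \<otimes>\<^bsub>G\<^esub> x)"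
proof -
  have m: "continuous_map (prod_topology T T) T (\<lambda>(x, y). x \<otimes>\<^bsub>G\<^esub> y)" and ts: "topspace T = carrier G"
    using assms by (auto simp: topological_group_def)
  have "continuous_map T (prod_topology T T) (\<lambda>x. (a, x))"
    using assms ts by (intro continuous_map_pairedI) auto
  from continuous_map_compose[OF this m] show ?thesis by (simp add: o_def)
qed

lemma tg_cont_rmult:
  assumes "topological_group G T" "a \<in> carrier G"
  shows "continuous_map T T (\<lambda>x. x \<otimes>\<^bsub>G\<^esub> a)"
proof -
  have m: "continuous_map (prod_topology T T) T (\<lambda>(x, y). x \<otimes>\<^bsub>G\<^esub> y)" and ts: "topspace T = carrier G"
    using assms by (auto simp: topological_group_def)
  have "continuous_map T (prod_topology T T) (\<lambda>x. (x, a))"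
    using assms ts by (intro continuous_map_pairedI) auto
  from continuous_map_compose[OF this m] show ?thesis by (simp add: o_def)
qed

context group begin

lemma tg_open_lcoset:
  assumes tg: "topological_group G T" and a: "a \<in> carrier G" and U: "openin T U"
  shows "openin T (l_coset G a U)"
proof -
  have ts: "topspace T = carrier G" using tg by (simp add: topological_group_def)
  have Uc: "U \<subseteq> carrier G" using openin_subset[OF U] ts by simp
  have "l_coset G a U = {x \<in> topspace T. inv a \<otimes> x \<in> U}"
  proof safe
    fix x assume "x \<in> l_coset G a U"
    then obtain u where u: "u \<in> U" "x = a \<otimes> u" by (auto simp: l_coset_def)
    then show "x \<in> topspace T" using Uc a ts by auto
    show "inv a \<otimes> x \<in> U" using u Uc a subsetD[OF Uc u(1)] by (simp add: m_assoc[symmetric])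
  next
    fix x assume "x \<in> topspace T" "inv a \<otimes> x \<in> U"
    then show "x \<in> l_coset G a U" using a ts unfolding l_coset_def
      by (auto intro!: bexI[of _ "inv a \<otimes> x"] simp: m_assoc[symmetric])
  qed
  moreover have "openin T {x \<in> topspace T. inv a \<otimes> x \<in> U}"
    by (rule openin_continuous_map_preimage[OF tg_cont_lmult[OF tg] U]) (use a in auto)
  ultimately show ?thesis by simp
qed

lemma tg_open_rcoset:
  assumes tg: "topological_group G T" and a: "a \<in> carrier G" and U: "openin T U"
  shows "openin T (r_coset G U a)"
proof -
  have ts: "topspace T = carrier G" using tg by (simp add: topological_group_def)
  have Uc: "U \<subseteq> carrier G" using openin_subset[OF U] ts by simp
  have "r_coset G U a = {x \<in> topspace T. x \<otimes> inv a \<in> U}"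
  proof safe
    fix x assume "x \<in> r_coset G U a"
    then obtain u where u: "u \<in> U" "x = u \<otimes> a" by (auto simp: r_coset_def)
    then show "x \<in> topspace T" using Uc a ts by auto
    show "x \<otimes> inv a \<in> U" using u Uc a subsetD[OF Uc u(1)] by (simp add: m_assoc)
  next
    fix x assume "x \<in> topspace T" "x \<otimes> inv a \<in> U"
    then show "x \<in> r_coset G U a" using a ts unfolding r_coset_def
      by (auto intro!: bexI[of _ "x \<otimes> inv a"] simp: m_assoc)
  qed
  moreover have "openin T {x \<in> topspace T. x \<otimes> inv a \<in> U}"
    by (rule openin_continuous_map_preimage[OF tg_cont_rmult[OF tg] U]) (use a in auto)
  ultimately show ?thesis by simp
qed

end

lemma clopen_sep:
  assumes "compact_space T" "Hausdorff_space T" "totally_disconnected_space T"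
    and a: "a \<in> topspace T" and b: "b \<in> topspace T" and ab: "a \<noteq> b"
  shows "\<exists>U. closedin T U \<and> openin T U \<and> a \<in> U \<and> b \<notin> U"
proof -
  have "connectedin T (connected_component_of_set T a)"
    by (rule connectedin_connected_component_of)
  then obtain c where c: "connected_component_of_set T a \<subseteq> {c}"
    using assms(3) unfolding totally_disconnected_space_def by blast
  have "connected_component_of T a a" using a by (simp add: connected_component_of_refl)
  then have "\<not> connected_component_of T a b" using c ab by auto
  moreover have "quasi_component_of T a = connected_component_of T a"
    using assms(1,2) by (intro quasi_eq_connected_component_of) auto
  ultimately have "\<not> quasi_component_of T a b" by metis
  then obtain U where U: "closedin T U" "openin T U" "\<not> (a \<in> U \<longleftrightarrow> b \<in> U)"
    using a b unfolding quasi_component_of_def by blast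
  show ?thesis
  proof (cases "a \<in> U")
    case True then show ?thesis using U by blast
  next
    case False
    then show ?thesis using U a b
      by (intro exI[of _ "topspace T - U"]) (auto simp: openin_diff closedin_diff)
  qed
qed



context group begin

lemma rcos_mono_set: "A \<subseteq> B \<Longrightarrow> r_coset G A g \<subseteq> r_coset G B g"
  by (auto simp: r_coset_def)

lemma tg_open_subgroup_in:
  assumes tg: "topological_group G T" and cs: "compact_space T"
    and Uc: "closedin T U" and Uo: "openin T U" and one: "\<one> \<in> U"
  shows "\<exists>H. subgroup H G \<and> openin T H \<and> H \<subseteq> U"
proof -
  have m: "continuous_map (prod_topology T T) T (\<lambda>(x, y). x \<otimes> y)" and ts: "topspace T = carrier G"
    and ic: "continuous_map T T (\<lambda>x. inv x)"
    using tg by (auto simp: topological_group_def)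
  have UG: "U \<subseteq> carrier G" using openin_subset[OF Uo] ts by simp
  define W0 where "W0 = {z \<in> topspace (prod_topology T T). (\<lambda>(x, y). x \<otimes> y) z \<in> U}"
  have W0o: "openin (prod_topology T T) W0"
    unfolding W0_def by (rule openin_continuous_map_preimage[OF m Uo])
  have Ucomp: "compactin T U" by (rule closedin_compact_space[OF cs Uc])
  have sub: "U \<times> {\<one>} \<subseteq> W0" using UG ts by (auto simp: W0_def)
  obtain U' V where UV: "openin T U'" "openin T V" "U \<subseteq> U'" "\<one> \<in> V" "U' \<times> V \<subseteq> W0"
    using tube_lemma_left[OF W0o Ucomp _ sub] ts by auto
  have VG: "V \<subseteq> carrier G" using openin_subset[OF UV(2)] ts by simp
  have UVU: "u \<otimes> v \<in> U" if "u \<in> U" "v \<in> V" for u v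
  proof -
    have "(u, v) \<in> U' \<times> V" using UV(3) that by auto
    then have "(u, v) \<in> W0" using UV(5) by blast
    then show ?thesis by (simp add: W0_def)
  qed
  define W where "W = {x \<in> topspace T. inv x \<in> V} \<inter> V"
  have Wo: "openin T W" unfolding W_def
    by (intro openin_Int openin_continuous_map_preimage[OF ic UV(2)] UV(2))
  have oneW: "\<one> \<in> W" using UV(4) ts by (auto simp: W_def)
  define H where "H = {g \<in> carrier G. r_coset G U g = U}"
  have rsub: "r_coset G U v \<subseteq> U" if "v \<in> V" for v
    using UVU that by (auto simp: r_coset_def)
  have WH: "W \<subseteq> H"
  proof
    fix w assume w: "w \<in> W"
    then have wG: "w \<in> carrier G" and wV: "w \<in> V" and iwV: "inv w \<in> V" using ts by (auto simp: W_def)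
    have "r_coset G U w \<subseteq> U" by (rule rsub[OF wV])
    moreover have "U \<subseteq> r_coset G U w"
    proof -
      have "U = r_coset G (r_coset G U (inv w)) w"
        using coset_mult_assoc[OF UG inv_closed[OF wG] wG] wG UG by simp
      also have "\<dots> \<subseteq> r_coset G U w" by (rule rcos_mono_set[OF rsub[OF iwV]])
      finally show ?thesis .
    qed
    ultimately show "w \<in> H" using wG by (auto simp: H_def)
  qed
  have Hsub: "subgroup H G"
  proof
    show "H \<subseteq> carrier G" by (auto simp: H_def)
    show "x \<otimes> y \<in> H" if "x \<in> H" "y \<in> H" for x y
      using that coset_mult_assoc[OF UG, of x y] by (auto simp: H_def)
    show "\<one> \<in> H" using UG by (simp add: H_def)
    show "inv x \<in> H" if "x \<in> H" for x
    proof -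
      have xG: "x \<in> carrier G" and e: "r_coset G U x = U" using that by (auto simp: H_def)
      have "r_coset G U (inv x) = r_coset G (r_coset G U x) (inv x)" using e by simp
      also have "\<dots> = U" using coset_mult_assoc[OF UG xG inv_closed[OF xG]] xG UG by simp
      finally show ?thesis using xG by (simp add: H_def)
    qed
  qed
  have HU: "H \<subseteq> U"
  proof
    fix h assume h: "h \<in> H"
    then have hG: "h \<in> carrier G" by (simp add: H_def)
    have "\<one> \<otimes> h \<in> r_coset G U h" using one unfolding r_coset_def by blast
    then have "h \<in> r_coset G U h" using hG by simp
    then show "h \<in> U" using h by (simp add: H_def)
  qed
  have Ho: "openin T H"
  proof (subst openin_subopen, intro ballI)
    fix h assume h: "h \<in> H"
    then have hG: "h \<in> carrier G" by (simp add: H_def)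
    have "l_coset G h W \<subseteq> H"
    proof
      fix x assume "x \<in> l_coset G h W"
      then obtain w where w: "w \<in> W" "x = h \<otimes> w" by (auto simp: l_coset_def)
      then show "x \<in> H" using subgroup.m_closed[OF Hsub h] WH by auto
    qed
    moreover have "h \<in> l_coset G h W" using oneW hG by (auto simp: l_coset_def intro!: bexI[of _ \<one>])
    ultimately show "\<exists>T'. openin T T' \<and> h \<in> T' \<and> T' \<subseteq> H"
      using tg_open_lcoset[OF tg hG Wo] by blast
  qed
  show ?thesis using Hsub Ho HU by blast
qed

end


context group begin

lemma inv_cancel_left': "x \<in> carrier G \<Longrightarrow> y \<in> carrier G \<Longrightarrow> inv x \<otimes> (x \<otimes> y) = y"
  by (simp add: m_assoc[symmetric])
lemma inv_cancel_left'': "x \<in> carrier G \<Longrightarrow> y \<in> carrier G \<Longrightarrow> x \<otimes> (inv x \<otimes> y) = y"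
  by (simp add: m_assoc[symmetric])

lemma conj_mult: "g \<in> carrier G \<Longrightarrow> x \<in> carrier G \<Longrightarrow> y \<in> carrier G \<Longrightarrow>
   g \<otimes> (x \<otimes> y) \<otimes> inv g = (g \<otimes> x \<otimes> inv g) \<otimes> (g \<otimes> y \<otimes> inv g)"
  by (simp add: m_assoc inv_cancel_left')

lemma conj_inv: "g \<in> carrier G \<Longrightarrow> x \<in> carrier G \<Longrightarrow>
   g \<otimes> inv x \<otimes> inv g = inv (g \<otimes> x \<otimes> inv g)"
  by (simp add: inv_mult_group m_assoc)

lemma conj_conj: "g \<in> carrier G \<Longrightarrow> y \<in> carrier G \<Longrightarrow> x \<in> carrier G \<Longrightarrow>
   g \<otimes> (y \<otimes> x \<otimes> inv y) \<otimes> inv g = (g \<otimes> y) \<otimes> x \<otimes> inv (g \<otimes> y)"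
  by (simp add: inv_mult_group m_assoc)

lemma conj_coset: "h \<in> carrier G \<Longrightarrow> f \<in> carrier G \<Longrightarrow> x \<in> carrier G \<Longrightarrow>
   (h \<otimes> f) \<otimes> x \<otimes> inv (h \<otimes> f) = h \<otimes> (f \<otimes> x \<otimes> inv f) \<otimes> inv h"
  by (simp add: inv_mult_group m_assoc)

lemma tg_open_normal_in:
  assumes tg: "topological_group G T" and cs: "compact_space T"
    and Hs: "subgroup H G" and Ho: "openin T H"
  shows "\<exists>N. N \<lhd> G \<and> openin T N \<and> N \<subseteq> H"
proof -
  have ts: "topspace T = carrier G" using tg by (simp add: topological_group_def)
  have HG: "H \<subseteq> carrier G" using Hs by (rule subgroup.subset)
  have cov: "topspace T \<subseteq> \<Union>((\<lambda>a. r_coset G H a) ` carrier G)"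
    using ts rcos_self[OF _ Hs] by blast
  have "compactin T (topspace T)" using cs by (simp add: compact_space_def)
  then obtain \<F> where F: "finite \<F>" "\<F> \<subseteq> (\<lambda>a. r_coset G H a) ` carrier G" "topspace T \<subseteq> \<Union>\<F>"
    using cov tg_open_rcoset[OF tg _ Ho] unfolding compactin_def by (metis (no_types, lifting) imageE)
  then obtain F where FF: "F \<subseteq> carrier G" "finite F" "\<F> = (\<lambda>a. r_coset G H a) ` F"
    by (meson finite_subset_image)
  define N where "N = {x \<in> carrier G. \<forall>g\<in>carrier G. g \<otimes> x \<otimes> inv g \<in> H}"
  have Neq: "N = (\<Inter>f\<in>F. {x \<in> topspace T. f \<otimes> x \<otimes> inv f \<in> H}) \<inter> topspace T"
  proof
    show "N \<subseteq> (\<Inter>f\<in>F. {x \<in> topspace T. f \<otimes> x \<otimes> inv f \<in> H}) \<inter> topspace T"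
      using FF(1) ts by (auto simp: N_def)
  next
    show "(\<Inter>f\<in>F. {x \<in> topspace T. f \<otimes> x \<otimes> inv f \<in> H}) \<inter> topspace T \<subseteq> N"
    proof
      fix x assume x: "x \<in> (\<Inter>f\<in>F. {x \<in> topspace T. f \<otimes> x \<otimes> inv f \<in> H}) \<inter> topspace T"
      then have xG: "x \<in> carrier G" using ts by auto
      have "g \<otimes> x \<otimes> inv g \<in> H" if g: "g \<in> carrier G" for g
      proof -
        obtain f where f: "f \<in> F" "g \<in> r_coset G H f" using F(3) FF(3) g ts by auto
        then obtain h where h: "h \<in> H" "g = h \<otimes> f" by (auto simp: r_coset_def)
        have fG: "f \<in> carrier G" using f FF(1) by auto
        have hG: "h \<in> carrier G" using h HG by auto
        have c: "f \<otimes> x \<otimes> inv f \<in> H" using x f by auto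
        have "h \<otimes> (f \<otimes> x \<otimes> inv f) \<in> H" by (rule subgroup.m_closed[OF Hs h(1) c])
        then have "h \<otimes> (f \<otimes> x \<otimes> inv f) \<otimes> inv h \<in> H"
          using subgroup.m_closed[OF Hs _ subgroup.m_inv_closed[OF Hs h(1)]] by blast
        then show ?thesis using h conj_coset[OF hG fG xG] by simp
      qed
      then show "x \<in> N" using xG by (simp add: N_def)
    qed
  qed
  have No: "openin T N"
  proof -
    have "openin T {x \<in> topspace T. f \<otimes> x \<otimes> inv f \<in> H}" if f: "f \<in> F" for f
    proof -
      have fG: "f \<in> carrier G" using f FF(1) by auto
      have "continuous_map T T (\<lambda>x. f \<otimes> x \<otimes> inv f)"
        using continuous_map_compose[OF tg_cont_lmult[OF tg fG] tg_cont_rmult[OF tg inv_closed[OF fG]]]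
        by (simp add: o_def)
      then show ?thesis by (rule openin_continuous_map_preimage[OF _ Ho])
    qed
    then show ?thesis unfolding Neq using FF(2) by (intro openin_INT) auto
  qed
  have NH: "N \<subseteq> H"
  proof
    fix x assume "x \<in> N"
    then have "\<one> \<otimes> x \<otimes> inv \<one> \<in> H" and "x \<in> carrier G" unfolding N_def
      using one_closed by blast+
    then show "x \<in> H" by simp
  qed
  have Nsub: "subgroup N G"
  proof
    show "N \<subseteq> carrier G" by (auto simp: N_def)
    show "x \<otimes> y \<in> N" if "x \<in> N" "y \<in> N" for x y
      using that conj_mult subgroup.m_closed[OF Hs] by (auto simp: N_def)
    show "\<one> \<in> N" using subgroup.one_closed[OF Hs] by (auto simp: N_def)
    show "inv x \<in> N" if "x \<in> N" for x
      using that conj_inv subgroup.m_inv_closed[OF Hs] by (auto simp: N_def)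
  qed
  have "N \<lhd> G"
    unfolding normal_inv_iff
  proof (intro conjI Nsub ballI)
    fix y h assume y: "y \<in> carrier G" and h: "h \<in> N"
    then have hG: "h \<in> carrier G" by (simp add: N_def)
    show "y \<otimes> h \<otimes> inv y \<in> N"
      using y h hG conj_conj by (auto simp: N_def)
  qed
  then show ?thesis using No NH by blast
qed

end


lemma funpow_closed: "f ` S \<subseteq> S \<Longrightarrow> x \<in> S \<Longrightarrow> (f ^^ k) x \<in> S"
  by (induction k) auto

lemma twisted_prod_closed:
  assumes "monoid K" "\<phi> ` carrier K \<subseteq> carrier K" "x \<in> carrier K"
  shows "twisted_prod K \<phi> k x \<in> carrier K"
  using assms by (induction k) (auto intro: monoid.m_closed funpow_closed)

lemma bij_of_funpow:
  assumes fS: "f ` S \<subseteq> S" and id: "\<forall>x\<in>S. (f ^^ n) x = x" and n: "n > 0"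
  shows "bij_betw f S S"
proof -
  obtain m where m: "n = Suc m" using n by (cases n) auto
  have inj: "inj_on f S"
  proof
    fix x y assume xy: "x \<in> S" "y \<in> S" "f x = f y"
    have "(f ^^ n) x = (f ^^ m) (f x)" by (simp add: m funpow_Suc_right del: funpow.simps)
    also have "\<dots> = (f ^^ m) (f y)" using xy by simp
    also have "\<dots> = (f ^^ n) y" by (simp add: m funpow_Suc_right del: funpow.simps)
    finally show "x = y" using id xy by simp
  qed
  have "S \<subseteq> f ` S"
  proof
    fix y assume y: "y \<in> S"
    have "y = (f ^^ n) y" using id y by simp
    also have "\<dots> = f ((f ^^ m) y)" by (simp add: m)
    finally show "y \<in> f ` S" using funpow_closed[OF fS y, of m] by blast
  qed
  then show ?thesis using inj fS by (auto simp: bij_betw_def)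
qed

lemma transport:
  assumes A: "group A" and B: "group B" and h: "h \<in> iso A B" and \<alpha>: "\<alpha> \<in> hom A A"
    and \<alpha>n: "\<forall>x\<in>carrier A. (\<alpha> ^^ n) x = x" and n: "n > 0"
  shows "aut_order_dvd B n (\<lambda>y. h (\<alpha> (inv_into (carrier A) h y)))
       \<and> card (X_set B n (\<lambda>y. h (\<alpha> (inv_into (carrier A) h y)))) = card (X_set A n \<alpha>)
       \<and> card (carrier B) = card (carrier A)"
proof -
  define g where "g = inv_into (carrier A) h"
  define \<psi> where "\<psi> = (\<lambda>y. h (\<alpha> (g y)))"
  have bh: "bij_betw h (carrier A) (carrier B)" using h by (simp add: iso_def)
  have hhom: "h \<in> hom A B" using h by (simp add: iso_def)
  have ginv: "g \<in> iso B A" unfolding g_def by (rule group.iso_set_sym[OF A h])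
  have ghom: "g \<in> hom B A" using ginv by (simp add: iso_def)
  have injh: "inj_on h (carrier A)" using bh by (simp add: bij_betw_def)
  have hcar: "h ` carrier A = carrier B" using bh by (simp add: bij_betw_def)
  have gh: "g (h z) = z" if "z \<in> carrier A" for z
    unfolding g_def using injh that by (simp add: inv_into_f_f)
  have hg: "h (g y) = y" if "y \<in> carrier B" for y
    unfolding g_def using hcar that by (simp add: f_inv_into_f)
  have gc: "g y \<in> carrier A" if "y \<in> carrier B" for y
    using ghom that by (auto simp: hom_def)
  have hc: "h z \<in> carrier B" if "z \<in> carrier A" for z
    using hhom that by (auto simp: hom_def)
  have \<alpha>c: "\<alpha> ` carrier A \<subseteq> carrier A" using \<alpha> by (auto simp: hom_def)
  have \<psi>c: "\<psi> ` carrier B \<subseteq> carrier B" using \<alpha>c gc hc by (auto simp: \<psi>_def)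
  have \<psi>pow: "(\<psi> ^^ k) y = h ((\<alpha> ^^ k) (g y))" if y: "y \<in> carrier B" for k y
  proof (induction k)
    case 0 then show ?case using hg y by simp
  next
    case (Suc k)
    have "(\<alpha> ^^ k) (g y) \<in> carrier A" by (rule funpow_closed[OF \<alpha>c gc[OF y]])
    then show ?case using Suc by (simp add: \<psi>_def gh)
  qed
  have \<psi>n: "\<forall>y\<in>carrier B. (\<psi> ^^ n) y = y"
    using \<psi>pow \<alpha>n gc hg by simp
  have \<psi>hom: "\<psi> \<in> hom B B"
  proof (rule homI)
    show "\<psi> x \<in> carrier B" if "x \<in> carrier B" for x using \<psi>c that by auto
    show "\<psi> (x \<otimes>\<^bsub>B\<^esub> y) = \<psi> x \<otimes>\<^bsub>B\<^esub> \<psi> y" if "x \<in> carrier B" "y \<in> carrier B" for x y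
    proof -
      have "g (x \<otimes>\<^bsub>B\<^esub> y) = g x \<otimes>\<^bsub>A\<^esub> g y" using ghom that by (simp add: hom_mult)
      moreover have "\<alpha> (g x \<otimes>\<^bsub>A\<^esub> g y) = \<alpha> (g x) \<otimes>\<^bsub>A\<^esub> \<alpha> (g y)" using \<alpha> gc that by (simp add: hom_mult)
      moreover have "h (\<alpha> (g x) \<otimes>\<^bsub>A\<^esub> \<alpha> (g y)) = h (\<alpha> (g x)) \<otimes>\<^bsub>B\<^esub> h (\<alpha> (g y))"
        using hhom \<alpha>c gc that by (intro hom_mult) auto
      ultimately show ?thesis by (simp add: \<psi>_def)
    qed
  qed
  have \<psi>iso: "\<psi> \<in> iso B B"
    using \<psi>hom bij_of_funpow[OF \<psi>c \<psi>n n] by (simp add: iso_def)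
  have tp: "twisted_prod B \<psi> k (h z) = h (twisted_prod A \<alpha> k z)" if z: "z \<in> carrier A" for k z
  proof (induction k)
    case 0 then show ?case using hom_one[OF hhom A B] by simp
  next
    case (Suc k)
    have c1: "twisted_prod A \<alpha> k z \<in> carrier A"
      by (rule twisted_prod_closed[OF group.is_monoid[OF A] \<alpha>c z])
    have c2: "(\<alpha> ^^ k) z \<in> carrier A" by (rule funpow_closed[OF \<alpha>c z])
    have "(\<psi> ^^ k) (h z) = h ((\<alpha> ^^ k) z)" using \<psi>pow[OF hc[OF z]] gh[OF z] by simp
    then show ?case using Suc hom_mult[OF hhom c1 c2] by simp
  qed
  have Xeq: "X_set B n \<psi> = h ` X_set A n \<alpha>"
  proof
    show "h ` X_set A n \<alpha> \<subseteq> X_set B n \<psi>"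
      using tp hc hom_one[OF hhom A B] by (auto simp: X_set_def)
  next
    show "X_set B n \<psi> \<subseteq> h ` X_set A n \<alpha>"
    proof
      fix y assume y: "y \<in> X_set B n \<psi>"
      then have yB: "y \<in> carrier B" and t: "twisted_prod B \<psi> n y = \<one>\<^bsub>B\<^esub>" by (auto simp: X_set_def)
      have z: "g y \<in> carrier A" using gc yB .
      have "h (twisted_prod A \<alpha> n (g y)) = h \<one>\<^bsub>A\<^esub>"
        using tp[OF z] hg[OF yB] t hom_one[OF hhom A B] by simp
      then have "twisted_prod A \<alpha> n (g y) = \<one>\<^bsub>A\<^esub>"
        using injh twisted_prod_closed[OF group.is_monoid[OF A] \<alpha>c z] group.is_monoid[OF A]
        by (meson inj_onD monoid.one_closed)
      then have "g y \<in> X_set A n \<alpha>" using z by (simp add: X_set_def)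
      then show "y \<in> h ` X_set A n \<alpha>" using hg[OF yB] by force
    qed
  qed
  have "card (X_set B n \<psi>) = card (X_set A n \<alpha>)"
    unfolding Xeq by (rule card_image) (rule inj_on_subset[OF injh], auto simp: X_set_def)
  moreover have "card (carrier B) = card (carrier A)" using bij_betw_same_card[OF bh] by simp
  moreover have "aut_order_dvd B n \<psi>" using \<psi>iso \<psi>n by (simp add: aut_order_dvd_def)
  ultimately show ?thesis by (simp add: \<psi>_def g_def)
qed



lemma (in normal) quot_phi_coset:
  assumes \<phi>: "\<phi> \<in> hom G G" and \<phi>H: "\<phi> ` H = H" and a: "a \<in> carrier G"
  shows "\<phi> ` (r_coset G H a) = r_coset G H (\<phi> a)"
proof -
  have "\<phi> ` (r_coset G H a) = (\<Union>h\<in>H. {\<phi> (h \<otimes> a)})"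
    by (auto simp: r_coset_def)
  also have "\<dots> = (\<Union>h\<in>H. {\<phi> h \<otimes> \<phi> a})"
    using \<phi> a subset by (intro SUP_cong refl) (auto simp: hom_mult)
  also have "\<dots> = (\<Union>h\<in>\<phi> ` H. {h \<otimes> \<phi> a})" by auto
  finally show ?thesis using \<phi>H by (simp add: r_coset_def)
qed

lemma (in normal) quot_phi:
  assumes \<phi>: "\<phi> \<in> hom G G" and \<phi>H: "\<phi> ` H = H" and \<phi>n: "\<forall>x\<in>carrier G. (\<phi> ^^ n) x = x"
  shows "(\<lambda>C. \<phi> ` C) \<in> hom (G Mod H) (G Mod H)"
    and "\<forall>C\<in>carrier (G Mod H). ((\<lambda>C. \<phi> ` C) ^^ n) C = C"
    and "\<And>a k. a \<in> carrier G \<Longrightarrow> twisted_prod (G Mod H) (\<lambda>C. \<phi> ` C) k (r_coset G H a)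
             = r_coset G H (twisted_prod G \<phi> k a)"
proof -
  have \<phi>c: "\<phi> ` carrier G \<subseteq> carrier G" using \<phi> by (auto simp: hom_def)
  have car: "carrier (G Mod H) = (\<lambda>x. r_coset G H x) ` carrier G" by (rule carrier_FactGroup)
  have pw: "((\<lambda>C. \<phi> ` C) ^^ k) (r_coset G H a) = r_coset G H ((\<phi> ^^ k) a)" if a: "a \<in> carrier G" for k a
  proof (induction k)
    case 0 then show ?case by simp
  next
    case (Suc k)
    then show ?case using quot_phi_coset[OF \<phi> \<phi>H funpow_closed[OF \<phi>c a, of k]] by simp
  qed
  show "(\<lambda>C. \<phi> ` C) \<in> hom (G Mod H) (G Mod H)"
  proof (rule homI)
    fix C assume "C \<in> carrier (G Mod H)"
    then obtain a where a: "a \<in> carrier G" "C = r_coset G H a" using car by auto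
    then show "\<phi> ` C \<in> carrier (G Mod H)"
      using quot_phi_coset[OF \<phi> \<phi>H a(1)] \<phi>c car by auto
  next
    fix C D assume "C \<in> carrier (G Mod H)" "D \<in> carrier (G Mod H)"
    then obtain a b where a: "a \<in> carrier G" "C = r_coset G H a" and b: "b \<in> carrier G" "D = r_coset G H b"
      using car by auto
    have "\<phi> ` (C \<otimes>\<^bsub>G Mod H\<^esub> D) = \<phi> ` (r_coset G H (a \<otimes> b))" using a b by (simp add: rcos_sum)
    also have "\<dots> = r_coset G H (\<phi> a \<otimes> \<phi> b)"
      using quot_phi_coset[OF \<phi> \<phi>H m_closed[OF a(1) b(1)]] \<phi> a b by (simp add: hom_mult)
    also have "\<dots> = \<phi> ` C \<otimes>\<^bsub>G Mod H\<^esub> \<phi> ` D"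
    proof -
      have pa: "\<phi> a \<in> carrier G" "\<phi> b \<in> carrier G" using a b \<phi>c by auto
      show ?thesis using a b quot_phi_coset[OF \<phi> \<phi>H] rcos_sum[OF pa] by simp
    qed
    finally show "\<phi> ` (C \<otimes>\<^bsub>G Mod H\<^esub> D) = \<phi> ` C \<otimes>\<^bsub>G Mod H\<^esub> \<phi> ` D" .
  qed
  show "\<forall>C\<in>carrier (G Mod H). ((\<lambda>C. \<phi> ` C) ^^ n) C = C"
    using pw \<phi>n car by auto
  show "twisted_prod (G Mod H) (\<lambda>C. \<phi> ` C) k (r_coset G H a) = r_coset G H (twisted_prod G \<phi> k a)"
    if a: "a \<in> carrier G" for a k
  proof (induction k)
    case 0 then show ?case by (simp add: coset_mult_one subset)
  next
    case (Suc k)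
    have c1: "twisted_prod G \<phi> k a \<in> carrier G" by (rule twisted_prod_closed[OF is_monoid \<phi>c a])
    have c2: "(\<phi> ^^ k) a \<in> carrier G" by (rule funpow_closed[OF \<phi>c a])
    show ?case using Suc pw[OF a, of k] by (simp add: rcos_sum[OF c1 c2])
  qed
qed



theorem proposition2p5:
  fixes G :: "('a, 'm) monoid_scheme" and T :: "'a topology"
    and M :: "'a set" and \<phi> :: "'a \<Rightarrow> 'a" and n :: nat
    and Cls :: "('b, 'c) monoid_scheme \<Rightarrow> bool"
    and \<mu> :: "'a measure"
  assumes n_pos: "n > 0"
    and X_finite_groups: "\<And>H. Cls H \<Longrightarrow> group H \<and> finite (carrier H)"
    and c_lt: "c_const Cls n < 1"
    and G_prof: "profinite_group G T"
    and M_normal: "M \<lhd> G" and M_open: "openin T M"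
    and phi_aut: "\<phi> \<in> iso (G\<lparr>carrier := M\<rparr>) (G\<lparr>carrier := M\<rparr>)"
    and phi_cont: "continuous_map (subtopology T M) (subtopology T M) \<phi>"
    and phi_n: "\<forall>x \<in> M. (\<phi> ^^ n) x = x"
    and hyp_N: "\<And>N. N \<lhd> G \<Longrightarrow> openin T N \<Longrightarrow> N \<subseteq> M \<Longrightarrow>
                   \<phi> ` N \<subseteq> N \<and> (\<exists>H. Cls H \<and> (G\<lparr>carrier := M\<rparr> Mod N) \<cong> H)"
    and haar: "haar_measure (G\<lparr>carrier := M\<rparr>) (subtopology T M) \<mu>"
    and neq: "X_set (G\<lparr>carrier := M\<rparr>) n \<phi> \<noteq> M"
  shows "measure \<mu> (X_set (G\<lparr>carrier := M\<rparr>) n \<phi>) \<le> c_const Cls n"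
proof -
  define K where "K = G\<lparr>carrier := M\<rparr>"
  have tg: "topological_group G T" and cs: "compact_space T" and hd: "Hausdorff_space T"
    and td: "totally_disconnected_space T"
    using G_prof by (auto simp: profinite_group_def)
  have grp: "group G" using tg by (simp add: topological_group_def)
  have ts: "topspace T = carrier G" using tg by (simp add: topological_group_def)
  have Msub: "subgroup M G" using M_normal by (simp add: normal_def)
  have Kgrp: "group K" unfolding K_def by (rule subgroup.subgroup_is_group[OF Msub grp])
  have MG: "M \<subseteq> carrier G" using subgroup.subset[OF Msub] .
  have carK: "carrier K = M" by (simp add: K_def)
  have phi_hom: "\<phi> \<in> hom K K" using phi_aut by (simp add: iso_def K_def)
  have phic: "\<phi> ` M \<subseteq> M" using phi_hom by (auto simp: hom_def K_def)
  define Xs where "Xs = X_set K n \<phi>"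
  have XM: "Xs \<subseteq> M" by (auto simp: Xs_def X_set_def K_def)
  obtain x0 where x0: "x0 \<in> M" "x0 \<notin> Xs" using neq XM unfolding Xs_def K_def by blast
  define t0 where "t0 = twisted_prod K \<phi> n x0"
  have t0M: "t0 \<in> M"
    using twisted_prod_closed[OF group.is_monoid[OF Kgrp], of \<phi> x0] phic x0 by (simp add: t0_def carK)
  have oneK: "\<one>\<^bsub>K\<^esub> = \<one>\<^bsub>G\<^esub>" by (simp add: K_def)
  have t0ne: "\<one>\<^bsub>G\<^esub> \<noteq> t0" using x0 by (auto simp: Xs_def X_set_def t0_def carK oneK)
  obtain U0 where U0: "closedin T U0" "openin T U0" "\<one>\<^bsub>G\<^esub> \<in> U0" "t0 \<notin> U0"
    using clopen_sep[OF cs hd td _ _ t0ne] ts t0M MG monoid.one_closed[OF group.is_monoid[OF grp]] by auto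
  obtain H0 where H0: "subgroup H0 G" "openin T H0" "H0 \<subseteq> U0"
    using group.tg_open_subgroup_in[OF grp tg cs U0(1,2,3)] by blast
  have H1: "subgroup (H0 \<inter> M) G" using group.subgroups_Inter_pair[OF grp H0(1) Msub] .
  have H1o: "openin T (H0 \<inter> M)" using H0(2) M_open by (rule openin_Int)
  obtain N where N: "N \<lhd> G" "openin T N" "N \<subseteq> H0 \<inter> M"
    using group.tg_open_normal_in[OF grp tg cs H1 H1o] by blast
  have NM: "N \<subseteq> M" and t0N: "t0 \<notin> N" using N(3) H0(3) U0(4) by auto
  obtain Hc where Hc: "Cls Hc" "(K Mod N) \<cong> Hc" and phiN: "\<phi> ` N \<subseteq> N"
    using hyp_N[OF N(1,2) NM] unfolding K_def by blast
  have Hcg: "group Hc" "finite (carrier Hc)" using X_finite_groups[OF Hc(1)] by auto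
  obtain hq where hq: "hq \<in> iso (K Mod N) Hc" using Hc(2) by (auto simp: is_iso_def)
  have NK: "N \<lhd> K" unfolding K_def by (rule group.normal_restrict_supergroup[OF grp Msub N(1) NM])
  have NsubK: "subgroup N K" using NK by (simp add: normal_def)
  have Qgrp: "group (K Mod N)" by (rule normal.factorgroup_is_group[OF NK])
  have phiNeq: "\<phi> ` N = N"
  proof
    show "\<phi> ` N \<subseteq> N" by (rule phiN)
    show "N \<subseteq> \<phi> ` N"
    proof
      fix y assume y: "y \<in> N"
      obtain m where m: "n = Suc m" using n_pos by (cases n) auto
      have "y = (\<phi> ^^ n) y" using phi_n y NM by auto
      also have "\<dots> = \<phi> ((\<phi> ^^ m) y)" by (simp add: m)
      finally show "y \<in> \<phi> ` N" using funpow_closed[OF phiN y, of m] by blast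
    qed
  qed
  have phin': "\<forall>x\<in>carrier K. (\<phi> ^^ n) x = x" using phi_n by (simp add: carK)
  note qp = normal.quot_phi[OF NK phi_hom phiNeq phin']
  define Q where "Q = K Mod N"
  define \<phi>' where "\<phi>' = (\<lambda>C. \<phi> ` C)"
  define \<psi> where "\<psi> = (\<lambda>y. hq (\<phi>' (inv_into (carrier Q) hq y)))"
  have psi: "aut_order_dvd Hc n \<psi>" "card (X_set Hc n \<psi>) = card (X_set Q n \<phi>')"
      "card (carrier Hc) = card (carrier Q)"
    using transport[OF Qgrp Hcg(1) hq qp(1) qp(2) n_pos] by (simp_all add: \<psi>_def Q_def \<phi>'_def)
  have finQ: "finite (carrier Q)"
    using hq Hcg(2) bij_betw_finite by (auto simp: iso_def Q_def)
  have carQ: "carrier Q = (\<lambda>a. r_coset K N a) ` M"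
    using carrier_FactGroup[of K N] by (simp add: Q_def carK)
  have carQ': "carrier Q = rcosets\<^bsub>K\<^esub> N" by (simp add: Q_def FactGroup_def)
  have rcK: "\<And>a. r_coset K N a = r_coset G N a" by (simp add: r_coset_def K_def)
  have lcK: "\<And>a A. l_coset K a A = l_coset G a A" by (simp add: l_coset_def K_def)
  have tpQ: "\<And>a. a \<in> M \<Longrightarrow> twisted_prod Q \<phi>' n (r_coset K N a) = r_coset K N (twisted_prod K \<phi> n a)"
    using qp(3) by (simp add: Q_def \<phi>'_def carK)
  have oneQ: "\<one>\<^bsub>Q\<^esub> = N" by (simp add: Q_def)
  have rc_eq: "r_coset K N t = N \<longleftrightarrow> t \<in> N" if t: "t \<in> M" for t
  proof
    assume "r_coset K N t = N"
    then show "t \<in> N" using group.rcos_self[OF Kgrp _ NsubK, of t] t carK by simp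
  next
    assume "t \<in> N"
    then show "r_coset K N t = N" using subgroup.rcos_const[OF NsubK Kgrp] by simp
  qed
  have memXQ: "r_coset K N a \<in> X_set Q n \<phi>' \<longleftrightarrow> twisted_prod K \<phi> n a \<in> N" if a: "a \<in> M" for a
  proof -
    have "twisted_prod K \<phi> n a \<in> M"
      using twisted_prod_closed[OF group.is_monoid[OF Kgrp], of \<phi> a] phic a by (simp add: carK)
    then show ?thesis using a tpQ[OF a] rc_eq carQ oneQ by (auto simp: X_set_def)
  qed
  have XQsub: "X_set Q n \<phi>' \<subseteq> carrier Q" by (auto simp: X_set_def)
  have x0Q: "r_coset K N x0 \<in> carrier Q - X_set Q n \<phi>'"
    using memXQ[OF x0(1)] t0N carQ x0(1) by (auto simp: t0_def)
  have cardlt: "card (X_set Q n \<phi>') < card (carrier Q)"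
    using x0Q XQsub finQ by (intro psubset_card_mono) auto
  have sets_mu: "sets \<mu> = sigma_sets M {U. openin (subtopology T M) U}" and space_mu: "space \<mu> = M"
    and em1: "emeasure \<mu> M = 1"
    and minv: "\<forall>g\<in>M. \<forall>A\<in>sets \<mu>. emeasure \<mu> (l_coset K g A) = emeasure \<mu> A"
    using haar by (auto simp: haar_measure_def K_def)
  have fm: "finite_measure \<mu>" by (rule finite_measureI) (simp add: space_mu em1)
  have open_sets: "C \<in> sets \<mu>" if "openin T C" "C \<subseteq> M" for C
  proof -
    have "openin (subtopology T M) C" unfolding openin_subtopology using that by blast
    then show ?thesis unfolding sets_mu by (auto intro: sigma_sets.Basic)
  qed
  have cosetM: "r_coset G N a \<subseteq> M" if "a \<in> M" for a
    using that NM subgroup.m_closed[OF Msub] by (auto simp: r_coset_def)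
  have coset_sets: "r_coset G N a \<in> sets \<mu>" if "a \<in> M" for a
    using open_sets[OF group.tg_open_rcoset[OF grp tg _ N(2)] cosetM[OF that]] that MG by auto
  have Nsets: "N \<in> sets \<mu>" using open_sets[OF N(2) NM] .
  have coset_meas: "measure \<mu> (r_coset G N a) = measure \<mu> N" if a: "a \<in> M" for a
  proof -
    have "r_coset G N a = l_coset G a N" using normal.coset_eq[OF N(1)] a MG by auto
    then have "emeasure \<mu> (r_coset G N a) = emeasure \<mu> N" using minv a Nsets lcK by auto
    then show ?thesis by (simp add: measure_def)
  qed
  have measC: "measure \<mu> C = measure \<mu> N" "C \<in> sets \<mu>" if "C \<in> carrier Q" for C
    using that carQ coset_meas coset_sets rcK by auto
  have disj: "disjoint_family_on (\<lambda>C. C) S" if "S \<subseteq> carrier Q" for S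
    using group.rcos_disjoint[OF Kgrp NsubK] that carQ'
    unfolding disjoint_family_on_def pairwise_def disjnt_def by blast
  have sumU: "measure \<mu> (\<Union>S) = real (card S) * measure \<mu> N" if "S \<subseteq> carrier Q" for S
  proof -
    have fS: "finite S" using finite_subset[OF that finQ] .
    have "measure \<mu> (\<Union>C\<in>S. C) = (\<Sum>C\<in>S. measure \<mu> C)"
      using finite_measure.finite_measure_finite_Union[OF fm fS _ disj[OF that]] measC that by auto
    also have "\<dots> = (\<Sum>C\<in>S. measure \<mu> N)" using measC that by (intro sum.cong) auto
    finally show ?thesis by simp
  qed
  have UQ: "\<Union>(carrier Q) = M" using group.rcosets_part_G[OF Kgrp NsubK] carQ' carK by simp
  have "1 = measure \<mu> M" using em1 by (simp add: measure_def)
  also have "\<dots> = real (card (carrier Q)) * measure \<mu> N" using sumU[of "carrier Q"] UQ by simp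
  finally have one_eq: "1 = real (card (carrier Q)) * measure \<mu> N" .
  define P where "P = \<Union>(X_set Q n \<phi>')"
  have measP: "measure \<mu> P = real (card (X_set Q n \<phi>')) / real (card (carrier Q))"
  proof -
    have "measure \<mu> P = real (card (X_set Q n \<phi>')) * measure \<mu> N" using sumU[OF XQsub] by (simp add: P_def)
    moreover have "card (carrier Q) > 0" using cardlt by simp
    ultimately show ?thesis using one_eq by (simp add: field_simps)
  qed
  have Psets: "P \<in> sets \<mu>"
  proof -
    have "finite (X_set Q n \<phi>')" using finite_subset[OF XQsub finQ] .
    then show ?thesis unfolding P_def using measC XQsub by (intro sets.finite_Union) auto
  qed
  have XP: "Xs \<subseteq> P"
  proof
    fix x assume x: "x \<in> Xs"
    then have xM: "x \<in> M" and tx: "twisted_prod K \<phi> n x = \<one>\<^bsub>G\<^esub>" using XM by (auto simp: Xs_def X_set_def oneK)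
    have "\<one>\<^bsub>G\<^esub> \<in> N" using subgroup.one_closed[OF NsubK] oneK by simp
    then have "r_coset K N x \<in> X_set Q n \<phi>'" using memXQ[OF xM] tx by simp
    moreover have "x \<in> r_coset K N x" using group.rcos_self[OF Kgrp _ NsubK] xM carK by simp
    ultimately show "x \<in> P" by (auto simp: P_def)
  qed
  have mXP: "measure \<mu> Xs \<le> measure \<mu> P"
  proof (cases "Xs \<in> sets \<mu>")
    case True then show ?thesis using finite_measure.finite_measure_mono[OF fm XP Psets] by simp
  next
    case False then show ?thesis by (simp add: measure_notin_sets)
  qed
  define S where "S = {real (card (X_set H n \<phi>)) / real (card (carrier H)) | (H :: ('b, 'c) monoid_scheme) \<phi>.
                          Cls H \<and> aut_order_dvd H n \<phi>} - {1}"
  have cS: "c_const Cls n = Sup S" by (simp add: c_const_def S_def)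
  have rat_ne: "real (card (X_set Q n \<phi>')) / real (card (carrier Q)) \<noteq> 1"
    using cardlt by (simp add: divide_eq_1_iff)
  have rS: "real (card (X_set Q n \<phi>')) / real (card (carrier Q)) \<in> S"
    unfolding S_def using Hc(1) psi rat_ne by (auto intro!: exI[of _ Hc] exI[of _ \<psi>])
  have bdd: "bdd_above S"
  proof (rule bdd_aboveI)
    fix x assume "x \<in> S"
    then obtain H f where H: "Cls H" "x = real (card (X_set H n f)) / real (card (carrier H))"
      unfolding S_def by blast
    have "finite (carrier H)" using X_finite_groups[OF H(1)] by simp
    then have "card (X_set H n f) \<le> card (carrier H)" by (intro card_mono) (auto simp: X_set_def)
    then show "x \<le> 1" using H(2) by (auto simp: divide_le_eq_1)
  qed
  have "measure \<mu> (X_set K n \<phi>) \<le> c_const Cls n"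
    using mXP measP cSup_upper[OF rS bdd] cS by (simp add: Xs_def)
  then show ?thesis by (simp add: K_def)
qed


end
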